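(* Let $K_2^p=\{x\in\mathbf{R}^p : \|(x_1,\dots,x_{p-1})\|_2\le x_p\}$ be the second-order cone and $\mathbf{R}_+^p$ the non-negative orthant. For every $x\in\mathbf{R}^p$, $$P_{K_2^p\cap\mathbf{R}_+^p}(x)=P_{K_2^p}\left(P_{\mathbf{R}_+^{p-1}\times\mathbf{R}}(x)\right).$$
   Context: For a closed convex set $C\subset\mathbf{R}^p$, $P_C(x)$ denotes the Euclidean projection of $x$ onto $C$, i.e. the unique point of $C$ closest to $x$ in $\|\cdot\|_2$. $\mathbf{R}_+^{p-1}\times\mathbf{R}$ is the set of $x\in\mathbf{R}^p$ with $x_1,\dots,x_{p-1}\ge 0$. *)

theory Defs
  imports "HOL-Analysis.Analysis"
begin

text \<open>Vectors in R^p are modelled as real^'n with CARD('n) = p; the coordinate j plays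
the role of the last coordinate x_p, the others are x_1..x_{p-1}.\<close>

definition soc :: "'n::finite \<Rightarrow> (real^'n) set" where
  "soc j = {x. sqrt (\<Sum>i\<in>UNIV - {j}. (x $ i)^2) \<le> x $ j}"

definition nonneg_orthant :: "(real^'n::finite) set" where
  "nonneg_orthant = {x. \<forall>i. 0 \<le> x $ i}"

definition nonneg_except :: "'n::finite \<Rightarrow> (real^'n) set" where
  "nonneg_except j = {x. \<forall>i. i \<noteq> j \<longrightarrow> 0 \<le> x $ i}"

abbreviation proj :: "(real^'n::finite) set \<Rightarrow> real^'n \<Rightarrow> real^'n" where
  "proj C x \<equiv> closest_point C x"

end

theory Submission
  imports Defs
begin

lemma proj_char:
  fixes S :: "(real^'n::finite) set"
  assumes "convex S" "closed S" "y \<in> S" "\<forall>w\<in>S. inner (x - y) (w - y) \<le> 0"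
  shows "closest_point S x = y"
proof -
  have "\<forall>w\<in>S. dist x y \<le> dist x w"
  proof
    fix w assume w: "w \<in> S"
    have e: "x - w = (x - y) - (w - y)" by simp
    have "(norm (x - w))^2 = (norm (x-y))^2 - 2 * inner (x - y) (w - y) + (norm (w-y))^2"
      unfolding e using dot_norm_neg[of "x - y" "w - y"] by simp
    hence "(norm (x-y))^2 \<le> (norm (x - w))^2" using assms(4) w by (smt (verit) zero_le_power2)
    hence "norm (x-y) \<le> norm (x-w)" by (simp add: power_mono_iff)
    thus "dist x y \<le> dist x w" by (simp add: dist_norm)
  qed
  thus ?thesis using closest_point_unique[OF assms(1-3)] by metis
qed

definition Lj :: "'n::finite \<Rightarrow> real^'n \<Rightarrow> real^'n" where
  "Lj j x = (\<chi> i. if i = j then 0 else x $ i)"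

lemma soc_alt: "soc (j::'n::finite) = {x. norm (Lj j x) \<le> x $ j}"
proof -
  have "sqrt (\<Sum>i\<in>UNIV - {j}. (x $ i)^2) = norm (Lj j x)" for x :: "real^'n::finite"
  proof -
    have "(\<Sum>i\<in>UNIV. (if i = j then 0 else x $ i)^2) = (\<Sum>i\<in>UNIV - {j}. (x $ i)^2)"
      by (rule sum.mono_neutral_cong_right) auto
    thus ?thesis by (simp add: norm_vec_def L2_set_def Lj_def)
  qed
  thus ?thesis by (simp add: soc_def)
qed

lemma Lj_lin: "linear (Lj j)"
  by (rule linearI) (auto simp: Lj_def vec_eq_iff)

lemma soc_convex: "convex (soc (j::'n::finite))"
  unfolding soc_alt convex_def
proof (safe)
  fix x y :: "real^'n::finite" and u v :: real
  assume h: "norm (Lj j x) \<le> x $ j" "norm (Lj j y) \<le> y $ j" "0 \<le> u" "0 \<le> v" "u + v = 1"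
  have "Lj j (u *\<^sub>R x + v *\<^sub>R y) = u *\<^sub>R Lj j x + v *\<^sub>R Lj j y"
    using Lj_lin[of j] by (simp add: linear_add linear_scale)
  hence "norm (Lj j (u *\<^sub>R x + v *\<^sub>R y)) \<le> u * norm (Lj j x) + v * norm (Lj j y)"
    using h by (metis abs_of_nonneg norm_scaleR norm_triangle_ineq)
  also have "\<dots> \<le> u * x $ j + v * y $ j" using h by (simp add: add_mono mult_left_mono)
  finally show "norm (Lj j (u *\<^sub>R x + v *\<^sub>R y)) \<le> (u *\<^sub>R x + v *\<^sub>R y) $ j" by simp
qed

lemma soc_closed: "closed (soc j)"
proof -
  have "continuous_on UNIV (Lj j)" using Lj_lin[of j]
    by (simp add: linear_continuous_on linear_linear)
  hence "continuous_on UNIV (\<lambda>x. norm (Lj j x))" by (intro continuous_intros)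
  thus ?thesis unfolding soc_alt
    by (intro closed_Collect_le) (auto intro: continuous_intros)
qed

lemma ne_convex: "convex (nonneg_except j)"
  unfolding convex_def nonneg_except_def by auto

lemma ne_closed: "closed (nonneg_except j)"
  unfolding nonneg_except_def
  by (intro closed_Collect_all closed_Collect_imp closed_Collect_le) (auto intro: continuous_intros)

lemma no_convex: "convex nonneg_orthant"
  unfolding convex_def nonneg_orthant_def by auto

lemma no_closed: "closed nonneg_orthant"
  unfolding nonneg_orthant_def
  by (intro closed_Collect_all closed_Collect_le) (auto intro: continuous_intros)

lemma dist_sq: "(dist a b)^2 = (\<Sum>k\<in>UNIV. (a $ k - b $ k)^2)" for a b :: "real^'n::finite"
  by (simp add: dist_norm norm_vec_def L2_set_def sum_nonneg)

lemma soc_refl: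
  fixes y :: "real^'n::finite"
  assumes ij: "i \<noteq> j" and yz: "y $ i * closest_point (soc j) y $ i \<le> 0"
  shows "closest_point (soc j) y $ i = 0"
proof -
  define z where "z = closest_point (soc j) y"
  define R where "R = (\<chi> k. if k = i then - z $ k else z $ k)"
  have ne: "soc j \<noteq> {}" using soc_def[of j] by (auto intro!: exI[of _ 0])
  have zK: "z \<in> soc j" unfolding z_def using closest_point_in_set[OF soc_closed ne] .
  have "(\<Sum>k\<in>UNIV - {j}. (R $ k)^2) = (\<Sum>k\<in>UNIV - {j}. (z $ k)^2)"
    by (rule sum.cong) (auto simp: R_def)
  moreover have "R $ j = z $ j" using ij by (simp add: R_def)
  ultimately have RK: "R \<in> soc j" using zK by (simp add: soc_def)
  have s1: "(dist y R)^2 = (y$i + z$i)^2 + (\<Sum>k\<in>UNIV - {i}. (y $ k - z $ k)^2)"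
  proof -
    have "(\<Sum>k\<in>UNIV - {i}. (y $ k - R $ k)^2) = (\<Sum>k\<in>UNIV - {i}. (y $ k - z $ k)^2)"
      by (rule sum.cong) (auto simp: R_def)
    moreover have "R $ i = - z$i" by (simp add: R_def)
    moreover have "(\<Sum>k\<in>UNIV. (y $ k - R $ k)^2) = (y $ i - R $ i)^2 + (\<Sum>k\<in>UNIV - {i}. (y $ k - R $ k)^2)"
      by (rule sum.remove) auto
    moreover have "(y $ i - R $ i)^2 = (y$i + z$i)^2" using \<open>R $ i = - z$i\<close> by simp
    ultimately show ?thesis unfolding dist_sq by linarith
  qed
  have s2: "(dist y z)^2 = (y$i - z$i)^2 + (\<Sum>k\<in>UNIV - {i}. (y $ k - z $ k)^2)"
    unfolding dist_sq by (rule sum.remove) auto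
  have "(y$i + z$i)^2 \<le> (y$i - z$i)^2" using yz unfolding z_def[symmetric]
    by (simp add: power2_eq_square algebra_simps)
  hence "(dist y R)^2 \<le> (dist y z)^2" using s1 s2 by linarith
  hence "dist y R \<le> dist y z" by (simp add: power_mono_iff)
  moreover have "\<forall>w\<in>soc j. dist y z \<le> dist y w"
    unfolding z_def using closest_point_le[OF soc_closed] by blast
  ultimately have "\<forall>w\<in>soc j. dist y R \<le> dist y w" by (meson order_trans)
  hence "R = z" unfolding z_def using closest_point_unique[OF soc_convex soc_closed RK] by blast
  hence "R $ i = z $ i" by simp
  hence "- z $ i = z $ i" by (simp add: R_def)
  thus ?thesis unfolding z_def by simp
qed

theorem lemma6:
  fixes x :: "real^'n::finite" and j :: 'n
  shows "proj (soc j \<inter> nonneg_orthant) x = proj (soc j) (proj (nonneg_except j) x)"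
proof -
  define y where "y = (\<chi> k. if k = j then x $ k else max (x $ k) 0)"
  have yE: "y \<in> nonneg_except j" by (simp add: y_def nonneg_except_def)
  have "proj (nonneg_except j) x = y"
  proof (rule proj_char[OF ne_convex ne_closed yE], intro ballI)
    fix w assume w: "w \<in> nonneg_except j"
    have "(x $ k - y $ k) * (w $ k - y $ k) \<le> 0" for k
      using w by (cases "k = j") (auto simp: y_def nonneg_except_def mult_nonpos_nonneg max_def)
    thus "inner (x - y) (w - y) \<le> 0" by (simp add: inner_vec_def sum_nonpos)
  qed
  moreover define z where "z = proj (soc j) y"
  have ne: "soc j \<noteq> {}" using soc_def[of j] by (auto intro!: exI[of _ 0])
  have zK: "z \<in> soc j" unfolding z_def using closest_point_in_set[OF soc_closed ne] .
  have zpos: "0 \<le> z $ k" for k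
  proof (cases "k = j")
    case True thus ?thesis using zK by (simp add: soc_def) (meson order_trans real_sqrt_ge_zero sum_nonneg zero_le_power2)
  next
    case False
    show ?thesis
    proof (rule ccontr)
      assume "\<not> 0 \<le> z $ k"
      moreover have "0 \<le> y $ k" using False by (simp add: y_def)
      ultimately have "y $ k * z $ k \<le> 0" by (simp add: mult_nonneg_nonpos)
      hence "z $ k = 0" using soc_refl[OF False] unfolding z_def by blast
      with \<open>\<not> 0 \<le> z $ k\<close> show False by simp
    qed
  qed
  have zneg: "z $ k = 0" if "k \<noteq> j" "x $ k < 0" for k
  proof -
    have "y $ k = 0" using that by (simp add: y_def)
    thus ?thesis using soc_refl[OF that(1), of y] unfolding z_def by simp
  qed
  have zKO: "z \<in> soc j \<inter> nonneg_orthant" using zK zpos by (simp add: nonneg_orthant_def)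
  have "proj (soc j \<inter> nonneg_orthant) x = z"
  proof (rule proj_char[OF convex_Int[OF soc_convex no_convex] closed_Int[OF soc_closed no_closed] zKO], intro ballI)
    fix w assume w: "w \<in> soc j \<inter> nonneg_orthant"
    have a: "inner (y - z) (w - z) \<le> 0" unfolding z_def
      using closest_point_dot[OF soc_convex soc_closed] w by blast
    have "(x $ k - y $ k) * (w $ k - z $ k) \<le> 0" for k
    proof (cases "k = j \<or> 0 \<le> x $ k")
      case True thus ?thesis by (auto simp: y_def)
    next
      case False
      hence "k \<noteq> j" "x $ k < 0" by auto
      thus ?thesis using zneg[of k] w by (auto simp: y_def nonneg_orthant_def mult_nonpos_nonneg)
    qed
    hence b: "inner (x - y) (w - z) \<le> 0" by (simp add: inner_vec_def sum_nonpos)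
    have "inner (x - z) (w - z) = inner (x - y) (w - z) + inner (y - z) (w - z)"
      by (simp add: inner_diff_left)
    thus "inner (x - z) (w - z) \<le> 0" using a b by linarith
  qed
  ultimately show ?thesis unfolding z_def by simp
qed

end
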